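(* Over any field $\mathbb{F}$, the $16\times16$ Walsh–Hadamard matrix $H_4$ satisfies $\mathcal{R}_{H_4}(1)\le 96$.
   Context: $H_1=\begin{bmatrix}1&1\\1&-1\end{bmatrix}$, $H_n=H_1^{\otimes n}$. $\mathcal{R}_A(r)=\min\{\mathrm{nnz}(B):\mathrm{rank}(A+B)\le r\}$ is the rank-$r$ rigidity over $\mathbb{F}$. *)

theory Defs
  imports "Jordan_Normal_Form.DL_Rank"
begin

definition kron :: "'a::semiring_1 mat \<Rightarrow> 'a mat \<Rightarrow> 'a mat" where
  "kron A B = mat (dim_row A * dim_row B) (dim_col A * dim_col B)
     (\<lambda>(i,j). A $$ (i div dim_row B, j div dim_col B) * B $$ (i mod dim_row B, j mod dim_col B))"

definition hadamard1 :: "'a::ring_1 mat" where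
  "hadamard1 = mat_of_rows_list 2 [[1, 1], [1, -1]]"

fun hadamard :: "nat \<Rightarrow> 'a::ring_1 mat" where
  "hadamard 0 = 1\<^sub>m 1"
| "hadamard (Suc n) = kron hadamard1 (hadamard n)"

definition nnz :: "'a::zero mat \<Rightarrow> nat" where
  "nnz B = card {(i,j). i < dim_row B \<and> j < dim_col B \<and> B $$ (i,j) \<noteq> 0}"

definition rigidity :: "'a::field mat \<Rightarrow> nat \<Rightarrow> nat" where
  "rigidity A r = Inf {nnz B | B. B \<in> carrier_mat (dim_row A) (dim_col A)
       \<and> vec_space.rank (dim_row A) (A + B) \<le> r}"

end

theory Submission
  imports Defs
begin

definition sg :: "bool \<Rightarrow> 'a::ring_1" where
  "sg b = (if b then -1 else 1)"

fun hb :: "nat \<Rightarrow> nat \<Rightarrow> nat \<Rightarrow> bool" where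
  "hb 0 i j = False"
| "hb (Suc n) i j = ((i div 2^n = 1 \<and> j div 2^n = 1) \<noteq> hb n (i mod 2^n) (j mod 2^n))"

lemma sg_mult: "sg a * (sg b :: 'a::ring_1) = sg (a \<noteq> b)"
  by (auto simp: sg_def)

lemma h1_dims: "dim_row (hadamard1 :: 'a::ring_1 mat) = 2" "dim_col (hadamard1 :: 'a::ring_1 mat) = 2"
  by (auto simp: hadamard1_def mat_of_rows_list_def)

lemma h1_entry: "i < 2 \<Longrightarrow> j < 2 \<Longrightarrow> (hadamard1 :: 'a::ring_1 mat) $$ (i,j) = sg (i = 1 \<and> j = 1)"
  by (auto simp: hadamard1_def mat_of_rows_list_def sg_def less_2_cases_iff)

lemma had_dims: "dim_row (hadamard n :: 'a::ring_1 mat) = 2^n \<and> dim_col (hadamard n :: 'a::ring_1 mat) = 2^n"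
  by (induction n) (auto simp: kron_def h1_dims)

lemma had_entry: "i < 2^n \<Longrightarrow> j < 2^n \<Longrightarrow> (hadamard n :: 'a::ring_1 mat) $$ (i,j) = sg (hb n i j)"
proof (induction n arbitrary: i j)
  case 0
  then show ?case by (simp add: sg_def)
next
  case (Suc n)
  have d: "dim_row (hadamard n :: 'a mat) = 2^n" "dim_col (hadamard n :: 'a mat) = 2^n"
    using had_dims by auto
  have i2: "i div 2^n < 2" "j div 2^n < 2" using Suc.prems
    by (auto simp: less_mult_imp_div_less)
  have "(hadamard (Suc n) :: 'a mat) $$ (i,j) =
     hadamard1 $$ (i div 2^n, j div 2^n) * (hadamard n :: 'a mat) $$ (i mod 2^n, j mod 2^n)"
    using Suc.prems by (simp add: kron_def d h1_dims)
  also have "\<dots> = sg (hb (Suc n) i j)"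
    by (simp add: h1_entry[OF i2] Suc.IH sg_mult)
  finally show ?case .
qed

definition bf :: "nat \<Rightarrow> bool" where
  "bf j = ((j mod 2 = 1 \<and> j div 2 mod 2 = 1) \<noteq> (j div 4 mod 2 = 1 \<and> j div 8 mod 2 = 1))"

lemma count96: "card {(i,j). i < 16 \<and> j < (16::nat) \<and> (bf i \<noteq> bf j) \<noteq> hb 4 i j} \<le> 96"
proof -
  have "{(i,j). i < 16 \<and> j < (16::nat) \<and> (bf i \<noteq> bf j) \<noteq> hb 4 i j}
     = set (filter (\<lambda>(i,j). (bf i \<noteq> bf j) \<noteq> hb 4 i j) (List.product [0..<16] [0..<16]))"
    by auto
  also have "card \<dots> \<le> length (filter (\<lambda>(i,j). (bf i \<noteq> bf j) \<noteq> hb 4 i j) (List.product [0..<16] [0..<16]))"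
    by (rule card_length)
  also have "\<dots> = 96" by code_simp
  finally show ?thesis .
qed

theorem mainTheorem8:
  "rigidity (hadamard 4 :: 'a::field mat) 1 \<le> 96"
proof -
  let ?H = "hadamard 4 :: 'a mat"
  have d: "dim_row ?H = 16" "dim_col ?H = 16" using had_dims[where n=4] by auto
  define B :: "'a mat" where "B = mat 16 16 (\<lambda>(i,j). sg (bf i) * sg (bf j) - ?H $$ (i,j))"
  have Bc: "B \<in> carrier_mat (dim_row ?H) (dim_col ?H)" by (simp add: B_def d)
  have AB: "?H + B = mat 16 16 (\<lambda>(i,j). sg (bf i) * sg (bf j))"
    by (rule eq_matI) (auto simp: B_def d)
  have rk: "vec_space.rank (dim_row ?H) (?H + B) \<le> 1"
    unfolding AB d
    by (rule vec_space.rank_le_1_product_entries[where f="\<lambda>i. sg (bf i)" and g="\<lambda>i. sg (bf i)" and nc=16]) auto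
  have "nnz B \<le> card {(i,j). i < 16 \<and> j < (16::nat) \<and> (bf i \<noteq> bf j) \<noteq> hb 4 i j}"
    unfolding nnz_def
  proof (rule card_mono)
    show "finite {(i,j). i < 16 \<and> j < (16::nat) \<and> (bf i \<noteq> bf j) \<noteq> hb 4 i j}"
      by (rule finite_subset[of _ "{..<16} \<times> {..<16}"]) auto
    show "{(i, j). i < dim_row B \<and> j < dim_col B \<and> B $$ (i, j) \<noteq> 0}
      \<subseteq> {(i, j). i < 16 \<and> j < 16 \<and> (bf i \<noteq> bf j) \<noteq> hb 4 i j}"
      by (auto simp: B_def had_entry sg_def split: if_splits)
  qed
  also have "\<dots> \<le> 96" by (rule count96)
  finally have n: "nnz B \<le> 96" .
  have "rigidity ?H 1 \<le> nnz B"
    unfolding rigidity_def by (rule cInf_lower) (use Bc rk in auto)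
  with n show ?thesis by simp
qed

end
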